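(* Let $n,m_A,m_B>0$ be integers, $A,B$ quantum systems of dimensions $m_A,m_B$, and $\psi_{AB}$ a bipartite state with $\psi_A=\mathrm{id}_{m_A}/m_A$ and $\psi_B=\mathrm{id}_{m_B}/m_B$; let $\rho=\rho(\psi_{AB})$ and let $\mathcal{T}:\mathcal{M}(B^n)\to\mathcal{M}(A^n)$ be the Markov super-operator with respect to $\psi_{AB}^{\otimes n}$. Then for every $Q\in\mathcal{M}(B^n)$ and $S\subseteq[n]$, $$\|\mathcal{T}(Q[S])\|'_2\le\rho^{|S|}\|Q[S]\|'_2.$$
   Context: On $\mathcal{M}(A^n)$ use $\langle X,Y\rangle=\frac1{m_A^n}\mathrm{Tr}X^\dagger Y$ and on $\mathcal{M}(B^n)$ use $\frac1{m_B^n}\mathrm{Tr}X^\dagger Y$; $\|X\|'_2=\langle X,X\rangle^{1/2}$. The Markov super-operator is defined by $\mathrm{Tr}((M^\dagger\otimes Q)\psi_{AB}^{\otimes n})=\langle M,\mathcal{T}(Q)\rangle$ for all $M,Q$. Maximal correlation: $\rho(\psi_{AB})=\sup\{|\mathrm{Tr}((P^\dagger\otimes Q)\psi_{AB})|:\mathrm{Tr}P=\mathrm{Tr}Q=0,\ \tfrac1{m_A}\mathrm{Tr}P^\dagger P=\tfrac1{m_B}\mathrm{Tr}Q^\dagger Q=1\}$. A standard orthonormal basis of $\mathcal{M}_k$ is an orthonormal basis (for $\frac1k\mathrm{Tr}X^\dagger Y$) of Hermitian matrices $\mathcal{B}_0=\mathrm{id}_k,\mathcal{B}_1,\ldots,\mathcal{B}_{k^2-1}$;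 with $\mathcal{B}_\sigma=\bigotimes_i\mathcal{B}_{\sigma_i}$ and $Q=\sum_\sigma\widehat Q(\sigma)\mathcal{B}_\sigma$, the Efron–Stein component is $Q[S]=\sum_{\sigma:\{i:\sigma_i\ne0\}=S}\widehat Q(\sigma)\mathcal{B}_\sigma$ (basis-independent). *)

theory Defs
  imports Complex_Main
begin

text \<open>Operators on an n-fold system of local dimension m are represented as functions
  on index lists (length n, entries below m); only values on these index sets matter.\<close>

type_synonym nmat = "nat list \<Rightarrow> nat list \<Rightarrow> complex"
type_synonym smat = "nat \<Rightarrow> nat \<Rightarrow> complex"
type_synonym bmat = "nat \<times> nat \<Rightarrow> nat \<times> nat \<Rightarrow> complex"

definition idx :: "nat \<Rightarrow> nat \<Rightarrow> nat list set" where
  "idx m n = {xs. length xs = n \<and> (\<forall>x\<in>set xs. x < m)}"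

definition ninner :: "nat \<Rightarrow> nat \<Rightarrow> nmat \<Rightarrow> nmat \<Rightarrow> complex" where
  "ninner m n X Y = (1 / of_nat (m ^ n)) *
     (\<Sum>i\<in>idx m n. \<Sum>j\<in>idx m n. cnj (X j i) * Y j i)"

definition nnorm2 :: "nat \<Rightarrow> nat \<Rightarrow> nmat \<Rightarrow> real" where
  "nnorm2 m n X = sqrt (Re (ninner m n X X))"

definition str :: "nat \<Rightarrow> smat \<Rightarrow> complex" where
  "str k P = (\<Sum>i<k. P i i)"

definition sinner :: "nat \<Rightarrow> smat \<Rightarrow> smat \<Rightarrow> complex" where
  "sinner k X Y = (1 / of_nat k) * (\<Sum>i<k. \<Sum>j<k. cnj (X j i) * Y j i)"

definition is_state :: "nat \<Rightarrow> nat \<Rightarrow> bmat \<Rightarrow> bool" where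
  "is_state mA mB \<psi> \<longleftrightarrow>
     (\<forall>x\<in>{..<mA}\<times>{..<mB}. \<forall>y\<in>{..<mA}\<times>{..<mB}. \<psi> x y = cnj (\<psi> y x)) \<and>
     (\<forall>v :: nat \<times> nat \<Rightarrow> complex.
        0 \<le> Re (\<Sum>x\<in>{..<mA}\<times>{..<mB}. \<Sum>y\<in>{..<mA}\<times>{..<mB}. cnj (v x) * \<psi> x y * v y)) \<and>
     (\<Sum>x\<in>{..<mA}\<times>{..<mB}. \<psi> x x) = 1"

definition marginal_A_maxmixed :: "nat \<Rightarrow> nat \<Rightarrow> bmat \<Rightarrow> bool" where
  "marginal_A_maxmixed mA mB \<psi> \<longleftrightarrow>
     (\<forall>a<mA. \<forall>a'<mA. (\<Sum>b<mB. \<psi> (a, b) (a', b)) = (if a = a' then 1 / of_nat mA else 0))"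

definition marginal_B_maxmixed :: "nat \<Rightarrow> nat \<Rightarrow> bmat \<Rightarrow> bool" where
  "marginal_B_maxmixed mA mB \<psi> \<longleftrightarrow>
     (\<forall>b<mB. \<forall>b'<mB. (\<Sum>a<mA. \<psi> (a, b) (a, b')) = (if b = b' then 1 / of_nat mB else 0))"

text \<open>entries of psi^{tensor n}, indexed by ((as,bs),(as',bs'))\<close>
definition psi_tensor :: "nat \<Rightarrow> bmat \<Rightarrow> nat list \<times> nat list \<Rightarrow> nat list \<times> nat list \<Rightarrow> complex" where
  "psi_tensor n \<psi> x y = (\<Prod>i<n. \<psi> (fst x ! i, snd x ! i) (fst y ! i, snd y ! i))"

text \<open>Tr ((M^dagger tensor Q) psi^{tensor n})\<close>
definition pair_trace :: "nat \<Rightarrow> nat \<Rightarrow> nat \<Rightarrow> bmat \<Rightarrow> nmat \<Rightarrow> nmat \<Rightarrow> complex" where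
  "pair_trace mA mB n \<psi> M Q =
     (\<Sum>as\<in>idx mA n. \<Sum>bs\<in>idx mB n. \<Sum>as'\<in>idx mA n. \<Sum>bs'\<in>idx mB n.
        cnj (M as' as) * Q bs bs' * psi_tensor n \<psi> (as', bs') (as, bs))"

definition is_markov_op :: "nat \<Rightarrow> nat \<Rightarrow> nat \<Rightarrow> bmat \<Rightarrow> (nmat \<Rightarrow> nmat) \<Rightarrow> bool" where
  "is_markov_op mA mB n \<psi> T \<longleftrightarrow>
     (\<forall>M Q. pair_trace mA mB n \<psi> M Q = ninner mA n M (T Q))"

text \<open>Tr ((P^dagger tensor Q) psi) for single-system P, Q\<close>
definition corr :: "nat \<Rightarrow> nat \<Rightarrow> bmat \<Rightarrow> smat \<Rightarrow> smat \<Rightarrow> complex" where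
  "corr mA mB \<psi> P Q =
     (\<Sum>a<mA. \<Sum>b<mB. \<Sum>a'<mA. \<Sum>b'<mB. cnj (P a' a) * Q b b' * \<psi> (a', b') (a, b))"

text \<open>maximal correlation; the supremum of the empty set (m_A = 1 or m_B = 1) is taken as 0\<close>
definition maxcorr :: "nat \<Rightarrow> nat \<Rightarrow> bmat \<Rightarrow> real" where
  "maxcorr mA mB \<psi> = Sup (insert 0 {cmod (corr mA mB \<psi> P Q) | P Q.
      str mA P = 0 \<and> str mB Q = 0 \<and> sinner mA P P = 1 \<and> sinner mB Q Q = 1})"

definition std_onb :: "nat \<Rightarrow> (nat \<Rightarrow> smat) \<Rightarrow> bool" where
  "std_onb k Bs \<longleftrightarrow>
     (\<forall>i<k. \<forall>j<k. Bs 0 i j = (if i = j then 1 else 0)) \<and>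
     (\<forall>s<k^2. \<forall>i<k. \<forall>j<k. Bs s i j = cnj (Bs s j i)) \<and>
     (\<forall>s<k^2. \<forall>t<k^2. sinner k (Bs s) (Bs t) = (if s = t then 1 else 0))"

definition basis_prod :: "(nat \<Rightarrow> smat) \<Rightarrow> nat list \<Rightarrow> nmat" where
  "basis_prod Bs \<sigma> bs bs' = (\<Prod>i<length \<sigma>. Bs (\<sigma> ! i) (bs ! i) (bs' ! i))"

definition fourier_coeff :: "nat \<Rightarrow> nat \<Rightarrow> (nat \<Rightarrow> smat) \<Rightarrow> nmat \<Rightarrow> nat list \<Rightarrow> complex" where
  "fourier_coeff k n Bs Q = (THE c. (\<forall>\<sigma>. \<sigma> \<notin> idx (k^2) n \<longrightarrow> c \<sigma> = 0) \<and>
      (\<forall>bs\<in>idx k n. \<forall>bs'\<in>idx k n.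
         Q bs bs' = (\<Sum>\<sigma>\<in>idx (k^2) n. c \<sigma> * basis_prod Bs \<sigma> bs bs')))"

text \<open>Efron-Stein component Q[S] (coordinates 0..n-1)\<close>
definition es_comp :: "nat \<Rightarrow> nat \<Rightarrow> (nat \<Rightarrow> smat) \<Rightarrow> nmat \<Rightarrow> nat set \<Rightarrow> nmat" where
  "es_comp k n Bs Q S = (\<lambda>bs bs'.
     \<Sum>\<sigma>\<in>{\<sigma>\<in>idx (k^2) n. {i. i < n \<and> \<sigma> ! i \<noteq> 0} = S}.
        fourier_coeff k n Bs Q \<sigma> * basis_prod Bs \<sigma> bs bs')"

end

theory Submission
  imports Defs
begin


definition lset :: "(nat \<Rightarrow> 'a set) \<Rightarrow> nat \<Rightarrow> 'a list set" where
  "lset D n = {xs. length xs = n \<and> (\<forall>i<n. xs ! i \<in> D i)}"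

lemma lset_0[simp]: "lset D 0 = {[]}"
  by (auto simp: lset_def)

lemma lset_Suc: "lset D (Suc n) = (\<lambda>(a,xs). a # xs) ` (D 0 \<times> lset (\<lambda>i. D (Suc i)) n)"
proof (rule set_eqI, rule iffI)
  fix ys assume "ys \<in> lset D (Suc n)"
  then show "ys \<in> (\<lambda>(a,xs). a # xs) ` (D 0 \<times> lset (\<lambda>i. D (Suc i)) n)"
    by (cases ys) (auto simp: lset_def image_iff)
next
  fix ys assume "ys \<in> (\<lambda>(a,xs). a # xs) ` (D 0 \<times> lset (\<lambda>i. D (Suc i)) n)"
  then show "ys \<in> lset D (Suc n)"
    by (auto simp: lset_def less_Suc_eq_0_disj)
qed

lemma sum_lset_Suc:
  "(\<Sum>xs\<in>lset D (Suc n). f xs) = (\<Sum>a\<in>D 0. \<Sum>xs\<in>lset (\<lambda>i. D (Suc i)) n. f (a # xs))"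
proof -
  have inj: "inj_on (\<lambda>(a,xs). a # xs) (D 0 \<times> lset (\<lambda>i. D (Suc i)) n)"
    by (auto simp: inj_on_def)
  show ?thesis
    unfolding lset_Suc sum.reindex[OF inj] by (simp add: sum.cartesian_product split_beta)
qed

lemma finite_lset: "(\<And>i. finite (D i)) \<Longrightarrow> finite (lset D n)"
proof (induction n arbitrary: D)
  case 0 then show ?case by simp
next
  case (Suc n) then show ?case by (simp add: lset_Suc)
qed

lemma idx_lset: "idx m n = lset (\<lambda>_. {..<m}) n"
  by (auto simp: idx_def lset_def all_set_conv_all_nth)

lemma sum_prod_lset:
  "(\<Sum>xs\<in>lset D n. \<Prod>i<n. g i (xs ! i)) = (\<Prod>i<n. \<Sum>x\<in>D i. (g i x :: 'b::comm_semiring_1))"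
proof (induction n arbitrary: D g)
  case 0 then show ?case by simp
next
  case (Suc n)
  have "(\<Sum>xs\<in>lset D (Suc n). \<Prod>i<Suc n. g i (xs ! i))
      = (\<Sum>a\<in>D 0. \<Sum>xs\<in>lset (\<lambda>i. D (Suc i)) n. g 0 a * (\<Prod>i<n. g (Suc i) (xs ! i)))"
    unfolding sum_lset_Suc by (simp add: prod.lessThan_Suc_shift del: prod.lessThan_Suc)
  also have "\<dots> = (\<Sum>a\<in>D 0. g 0 a * (\<Prod>i<n. \<Sum>x\<in>D (Suc i). g (Suc i) x))"
    by (simp add: sum_distrib_left[symmetric] Suc.IH[where D="\<lambda>i. D (Suc i)" and g="\<lambda>i. g (Suc i)"])
  also have "\<dots> = (\<Prod>i<Suc n. \<Sum>x\<in>D i. g i x)"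
    by (simp add: prod.lessThan_Suc_shift sum_distrib_right del: prod.lessThan_Suc)
  finally show ?case .
qed

lemma finite_idx[simp]: "finite (idx m n)"
  unfolding idx_lset by (rule finite_lset) simp



lemma swap4: "(\<Sum>a\<in>A. \<Sum>x\<in>X. \<Sum>a'\<in>A'. \<Sum>x'\<in>X'. f a x a' x') =
   (\<Sum>x\<in>X. \<Sum>x'\<in>X'. \<Sum>a\<in>A. \<Sum>a'\<in>A'. (f a x a' x' :: 'b::comm_monoid_add))"
proof -
  have "(\<Sum>a\<in>A. \<Sum>x\<in>X. \<Sum>a'\<in>A'. \<Sum>x'\<in>X'. f a x a' x') = (\<Sum>x\<in>X. \<Sum>a\<in>A. \<Sum>a'\<in>A'. \<Sum>x'\<in>X'. f a x a' x')"
    by (rule sum.swap)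
  also have "\<dots> = (\<Sum>x\<in>X. \<Sum>a\<in>A. \<Sum>x'\<in>X'. \<Sum>a'\<in>A'. f a x a' x')"
    by (rule sum.cong[OF refl], rule sum.cong[OF refl], rule sum.swap)
  also have "\<dots> = (\<Sum>x\<in>X. \<Sum>x'\<in>X'. \<Sum>a\<in>A. \<Sum>a'\<in>A'. f a x a' x')"
    by (rule sum.cong[OF refl], rule sum.swap)
  finally show ?thesis .
qed

lemma sum_idx_Suc: "(\<Sum>xs\<in>idx m (Suc n). f xs) = (\<Sum>a<m. \<Sum>xs\<in>idx m n. f (a # xs))"
  unfolding idx_lset sum_lset_Suc by simp

lemma tensor_le:
  fixes m :: nat and G :: "nat \<Rightarrow> nat \<Rightarrow> smat" and D :: "nat \<Rightarrow> nat set"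
    and lam :: "nat \<Rightarrow> real" and c :: "nat list \<Rightarrow> complex"
  assumes fin: "\<And>i. finite (D i)" and lam0: "\<And>i. lam i \<ge> 0"
  and single: "\<And>i d. (\<Sum>a<m. \<Sum>a'<m. (cmod (\<Sum>s\<in>D i. d s * G i s a' a))\<^sup>2)
       \<le> real m * lam i * (\<Sum>s\<in>D i. (cmod (d s))\<^sup>2)"
  shows "(\<Sum>as\<in>idx m n. \<Sum>as'\<in>idx m n.
     (cmod (\<Sum>\<sigma>\<in>lset D n. c \<sigma> * (\<Prod>i<n. G i (\<sigma>!i) (as'!i) (as!i))))\<^sup>2)
    \<le> real m ^ n * (\<Prod>i<n. lam i) * (\<Sum>\<sigma>\<in>lset D n. (cmod (c \<sigma>))\<^sup>2)"
  using fin lam0 single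
proof (induction n arbitrary: G D lam c)
  case 0 then show ?case by (simp add: idx_lset)
next
  case (Suc n)
  define D' where "D' = (\<lambda>i. D (Suc i))"
  define G' where "G' = (\<lambda>i. G (Suc i))"
  define lam' where "lam' = (\<lambda>i. lam (Suc i))"
  define Y where "Y s as' as = (\<Sum>\<tau>\<in>lset D' n. c (s#\<tau>) * (\<Prod>i<n. G' i (\<tau>!i) (as'!i) (as!i)))" for s as' as
  have e1: "(\<Sum>\<sigma>\<in>lset D (Suc n). c \<sigma> * (\<Prod>i<Suc n. G i (\<sigma>!i) ((a'#as')!i) ((a#as)!i)))
      = (\<Sum>s\<in>D 0. Y s as' as * G 0 s a' a)" for a a' as as'
    unfolding sum_lset_Suc Y_def D'_def G'_def
    apply (simp add: prod.lessThan_Suc_shift del: prod.lessThan_Suc)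
    apply (unfold sum_distrib_right)
    by (intro sum.cong refl) (simp add: ac_simps)
  have IH: "(\<Sum>as\<in>idx m n. \<Sum>as'\<in>idx m n. (cmod (Y s as' as))\<^sup>2)
     \<le> real m ^ n * (\<Prod>i<n. lam' i) * (\<Sum>\<tau>\<in>lset D' n. (cmod (c (s#\<tau>)))\<^sup>2)" for s
    unfolding Y_def
    by (rule Suc.IH) (use Suc.prems in \<open>auto simp: D'_def G'_def lam'_def\<close>)
  have "(\<Sum>as\<in>idx m (Suc n). \<Sum>as'\<in>idx m (Suc n).
     (cmod (\<Sum>\<sigma>\<in>lset D (Suc n). c \<sigma> * (\<Prod>i<Suc n. G i (\<sigma>!i) (as'!i) (as!i))))\<^sup>2)
     = (\<Sum>a<m. \<Sum>as\<in>idx m n. \<Sum>a'<m. \<Sum>as'\<in>idx m n. (cmod (\<Sum>s\<in>D 0. Y s as' as * G 0 s a' a))\<^sup>2)"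
    unfolding sum_idx_Suc by (simp only: e1)
  also have "\<dots> = (\<Sum>as\<in>idx m n. \<Sum>as'\<in>idx m n. \<Sum>a<m. \<Sum>a'<m. (cmod (\<Sum>s\<in>D 0. Y s as' as * G 0 s a' a))\<^sup>2)"
    by (rule swap4)
  also have "\<dots> \<le> (\<Sum>as\<in>idx m n. \<Sum>as'\<in>idx m n. real m * lam 0 * (\<Sum>s\<in>D 0. (cmod (Y s as' as))\<^sup>2))"
    by (intro sum_mono) (use Suc.prems(3)[where i=0] in \<open>simp add: mult.commute\<close>)
  also have "\<dots> = real m * lam 0 * (\<Sum>s\<in>D 0. \<Sum>as\<in>idx m n. \<Sum>as'\<in>idx m n. (cmod (Y s as' as))\<^sup>2)"
    by (simp add: sum_distrib_left sum.swap[of _ "D 0"])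
  also have "\<dots> \<le> real m * lam 0 * (\<Sum>s\<in>D 0. real m ^ n * (\<Prod>i<n. lam' i) * (\<Sum>\<tau>\<in>lset D' n. (cmod (c (s#\<tau>)))\<^sup>2))"
    by (intro mult_left_mono sum_mono IH) (use Suc.prems(2)[of 0] in auto)
  also have "\<dots> = real m ^ Suc n * (\<Prod>i<Suc n. lam i) * (\<Sum>\<sigma>\<in>lset D (Suc n). (cmod (c \<sigma>))\<^sup>2)"
    unfolding sum_lset_Suc lam'_def D'_def
    by (simp add: prod.lessThan_Suc_shift sum_distrib_left ac_simps del: prod.lessThan_Suc)
  finally show ?case .
qed

lemma tensor_ge:
  fixes m :: nat and G :: "nat \<Rightarrow> nat \<Rightarrow> smat" and D :: "nat \<Rightarrow> nat set"
    and lam :: "nat \<Rightarrow> real" and c :: "nat list \<Rightarrow> complex"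
  assumes fin: "\<And>i. finite (D i)" and lam0: "\<And>i. lam i \<ge> 0"
  and single: "\<And>i d. (\<Sum>a<m. \<Sum>a'<m. (cmod (\<Sum>s\<in>D i. d s * G i s a' a))\<^sup>2)
       \<ge> real m * lam i * (\<Sum>s\<in>D i. (cmod (d s))\<^sup>2)"
  shows "(\<Sum>as\<in>idx m n. \<Sum>as'\<in>idx m n.
     (cmod (\<Sum>\<sigma>\<in>lset D n. c \<sigma> * (\<Prod>i<n. G i (\<sigma>!i) (as'!i) (as!i))))\<^sup>2)
    \<ge> real m ^ n * (\<Prod>i<n. lam i) * (\<Sum>\<sigma>\<in>lset D n. (cmod (c \<sigma>))\<^sup>2)"
  using fin lam0 single
proof (induction n arbitrary: G D lam c)
  case 0 then show ?case by (simp add: idx_lset)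
next
  case (Suc n)
  define D' where "D' = (\<lambda>i. D (Suc i))"
  define G' where "G' = (\<lambda>i. G (Suc i))"
  define lam' where "lam' = (\<lambda>i. lam (Suc i))"
  define Y where "Y s as' as = (\<Sum>\<tau>\<in>lset D' n. c (s#\<tau>) * (\<Prod>i<n. G' i (\<tau>!i) (as'!i) (as!i)))" for s as' as
  have e1: "(\<Sum>\<sigma>\<in>lset D (Suc n). c \<sigma> * (\<Prod>i<Suc n. G i (\<sigma>!i) ((a'#as')!i) ((a#as)!i)))
      = (\<Sum>s\<in>D 0. Y s as' as * G 0 s a' a)" for a a' as as'
    unfolding sum_lset_Suc Y_def D'_def G'_def
    apply (simp add: prod.lessThan_Suc_shift del: prod.lessThan_Suc)
    apply (unfold sum_distrib_right)
    by (intro sum.cong refl) (simp add: ac_simps)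
  have IH: "(\<Sum>as\<in>idx m n. \<Sum>as'\<in>idx m n. (cmod (Y s as' as))\<^sup>2)
     \<ge> real m ^ n * (\<Prod>i<n. lam' i) * (\<Sum>\<tau>\<in>lset D' n. (cmod (c (s#\<tau>)))\<^sup>2)" for s
    unfolding Y_def
    by (rule Suc.IH) (use Suc.prems in \<open>auto simp: D'_def G'_def lam'_def\<close>)
  have "(\<Sum>as\<in>idx m (Suc n). \<Sum>as'\<in>idx m (Suc n).
     (cmod (\<Sum>\<sigma>\<in>lset D (Suc n). c \<sigma> * (\<Prod>i<Suc n. G i (\<sigma>!i) (as'!i) (as!i))))\<^sup>2)
     = (\<Sum>a<m. \<Sum>as\<in>idx m n. \<Sum>a'<m. \<Sum>as'\<in>idx m n. (cmod (\<Sum>s\<in>D 0. Y s as' as * G 0 s a' a))\<^sup>2)"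
    unfolding sum_idx_Suc by (simp only: e1)
  also have "\<dots> = (\<Sum>as\<in>idx m n. \<Sum>as'\<in>idx m n. \<Sum>a<m. \<Sum>a'<m. (cmod (\<Sum>s\<in>D 0. Y s as' as * G 0 s a' a))\<^sup>2)"
    by (rule swap4)
  finally have E1: "(\<Sum>as\<in>idx m (Suc n). \<Sum>as'\<in>idx m (Suc n).
     (cmod (\<Sum>\<sigma>\<in>lset D (Suc n). c \<sigma> * (\<Prod>i<Suc n. G i (\<sigma>!i) (as'!i) (as!i))))\<^sup>2)
     = (\<Sum>as\<in>idx m n. \<Sum>as'\<in>idx m n. \<Sum>a<m. \<Sum>a'<m. (cmod (\<Sum>s\<in>D 0. Y s as' as * G 0 s a' a))\<^sup>2)" .
  have E2: "(\<Sum>as\<in>idx m n. \<Sum>as'\<in>idx m n. \<Sum>a<m. \<Sum>a'<m. (cmod (\<Sum>s\<in>D 0. Y s as' as * G 0 s a' a))\<^sup>2) \<ge> (\<Sum>as\<in>idx m n. \<Sum>as'\<in>idx m n. real m * lam 0 * (\<Sum>s\<in>D 0. (cmod (Y s as' as))\<^sup>2))"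
    by (intro sum_mono) (use Suc.prems(3)[where i=0] in \<open>simp add: mult.commute\<close>)
  have E3: "(\<Sum>as\<in>idx m n. \<Sum>as'\<in>idx m n. real m * lam 0 * (\<Sum>s\<in>D 0. (cmod (Y s as' as))\<^sup>2)) = real m * lam 0 * (\<Sum>s\<in>D 0. \<Sum>as\<in>idx m n. \<Sum>as'\<in>idx m n. (cmod (Y s as' as))\<^sup>2)"
    by (simp add: sum_distrib_left sum.swap[of _ "D 0"])
  have E4: "real m * lam 0 * (\<Sum>s\<in>D 0. \<Sum>as\<in>idx m n. \<Sum>as'\<in>idx m n. (cmod (Y s as' as))\<^sup>2) \<ge> real m * lam 0 * (\<Sum>s\<in>D 0. real m ^ n * (\<Prod>i<n. lam' i) * (\<Sum>\<tau>\<in>lset D' n. (cmod (c (s#\<tau>)))\<^sup>2))"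
    by (intro mult_left_mono sum_mono IH) (use Suc.prems(2)[of 0] in auto)
  have E5: "real m * lam 0 * (\<Sum>s\<in>D 0. real m ^ n * (\<Prod>i<n. lam' i) * (\<Sum>\<tau>\<in>lset D' n. (cmod (c (s#\<tau>)))\<^sup>2)) = real m ^ Suc n * (\<Prod>i<Suc n. lam i) * (\<Sum>\<sigma>\<in>lset D (Suc n). (cmod (c \<sigma>))\<^sup>2)"
    unfolding sum_lset_Suc lam'_def D'_def
    by (simp add: prod.lessThan_Suc_shift sum_distrib_left ac_simps del: prod.lessThan_Suc)
  show ?case using E1 E2 E3 E4 E5 by linarith
qed



lemma cnj_mult_self: "cnj z * z = complex_of_real ((cmod z)\<^sup>2)"
  by (metis complex_norm_square mult.commute)

lemma swap22: "(\<Sum>a\<in>A. \<Sum>b\<in>B. \<Sum>c\<in>C. \<Sum>d\<in>E. f a b c d) =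
   (\<Sum>c\<in>C. \<Sum>d\<in>E. \<Sum>a\<in>A. \<Sum>b\<in>B. (f a b c d :: 'x::comm_monoid_add))"
proof -
  have "(\<Sum>a\<in>A. \<Sum>b\<in>B. \<Sum>c\<in>C. \<Sum>d\<in>E. f a b c d) = (\<Sum>a\<in>A. \<Sum>c\<in>C. \<Sum>b\<in>B. \<Sum>d\<in>E. f a b c d)"
    by (rule sum.cong[OF refl], rule sum.swap)
  also have "\<dots> = (\<Sum>a\<in>A. \<Sum>c\<in>C. \<Sum>d\<in>E. \<Sum>b\<in>B. f a b c d)"
    by (rule sum.cong[OF refl], rule sum.cong[OF refl], rule sum.swap)
  also have "\<dots> = (\<Sum>c\<in>C. \<Sum>a\<in>A. \<Sum>d\<in>E. \<Sum>b\<in>B. f a b c d)"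
    by (rule sum.swap)
  also have "\<dots> = (\<Sum>c\<in>C. \<Sum>d\<in>E. \<Sum>a\<in>A. \<Sum>b\<in>B. f a b c d)"
    by (rule sum.cong[OF refl], rule sum.swap)
  finally show ?thesis .
qed

lemma onb_sum:
  assumes onb: "std_onb k Bs" and D: "D \<subseteq> {..<k^2}"
  shows "(\<Sum>b<k. \<Sum>b'<k. (cmod (\<Sum>s\<in>D. d s * Bs s b' b))\<^sup>2) = real k * (\<Sum>s\<in>D. (cmod (d s))\<^sup>2)"
proof -
  have fD: "finite D" using D finite_subset by blast
  have orth: "(\<Sum>b<k. \<Sum>b'<k. cnj (Bs s b' b) * Bs t b' b) = (if s = t then of_nat k else 0)"
    if "s \<in> D" "t \<in> D" for s t
  proof -
    have "sinner k (Bs s) (Bs t) = (if s = t then 1 else 0)"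
      using onb that D unfolding std_onb_def by blast
    moreover have "k > 0"
    proof (rule ccontr)
      assume "\<not> k > 0" then have "k = 0" by simp
      with that D show False by auto
    qed
    ultimately show ?thesis unfolding sinner_def by (auto split: if_splits)
  qed
  have "complex_of_real (\<Sum>b<k. \<Sum>b'<k. (cmod (\<Sum>s\<in>D. d s * Bs s b' b))\<^sup>2)
     = (\<Sum>b<k. \<Sum>b'<k. cnj (\<Sum>s\<in>D. d s * Bs s b' b) * (\<Sum>t\<in>D. d t * Bs t b' b))"
    by (simp only: of_real_sum cnj_mult_self)
  also have "\<dots> = (\<Sum>b<k. \<Sum>b'<k. \<Sum>s\<in>D. \<Sum>t\<in>D. cnj (d s) * d t * (cnj (Bs s b' b) * Bs t b' b))"
    by (simp only: cnj_sum complex_cnj_mult sum_product) (simp add: ac_simps)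
  also have "\<dots> = (\<Sum>s\<in>D. \<Sum>t\<in>D. \<Sum>b<k. \<Sum>b'<k. cnj (d s) * d t * (cnj (Bs s b' b) * Bs t b' b))"
    by (rule swap22)
  also have "\<dots> = (\<Sum>s\<in>D. \<Sum>t\<in>D. cnj (d s) * d t * (if s = t then of_nat k else 0))"
    by (intro sum.cong refl) (simp add: sum_distrib_left[symmetric] orth)
  also have "\<dots> = (\<Sum>s\<in>D. of_nat k * (cnj (d s) * d s))"
    by (simp add: fD ac_simps if_distrib cong: if_cong)
  also have "\<dots> = complex_of_real (real k * (\<Sum>s\<in>D. (cmod (d s))\<^sup>2))"
    by (simp add: cnj_mult_self sum_distrib_left)
  finally show ?thesis by (simp only: of_real_eq_iff)
qed



definition tt :: "nat \<Rightarrow> nat \<Rightarrow> bmat \<Rightarrow> smat \<Rightarrow> smat" where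
  "tt m k \<psi> Y = (\<lambda>a' a. of_nat m * (\<Sum>b<k. \<Sum>b'<k. Y b b' * \<psi> (a',b') (a,b)))"

lemma sinner_self: "sinner k X X = complex_of_real ((\<Sum>i<k. \<Sum>j<k. (cmod (X j i))\<^sup>2) / real k)"
  unfolding sinner_def by (simp add: cnj_mult_self)

lemma tt_scale: "tt m k \<psi> (\<lambda>b b'. c * Y b b') a' a = c * tt m k \<psi> Y a' a"
  unfolding tt_def by (simp add: sum_distrib_left ac_simps)

lemma tt_trace:
  assumes "marginal_B_maxmixed m k \<psi>"
  shows "(\<Sum>a<m. tt m k \<psi> Y a a) = of_nat m / of_nat k * (\<Sum>b<k. Y b b)"
proof -
  have "(\<Sum>a<m. tt m k \<psi> Y a a) = of_nat m * (\<Sum>a<m. \<Sum>b<k. \<Sum>b'<k. Y b b' * \<psi> (a,b') (a,b))"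
    unfolding tt_def by (simp add: sum_distrib_left)
  also have "(\<Sum>a<m. \<Sum>b<k. \<Sum>b'<k. Y b b' * \<psi> (a,b') (a,b)) = (\<Sum>b<k. \<Sum>b'<k. \<Sum>a<m. Y b b' * \<psi> (a,b') (a,b))"
    by (simp add: sum.swap[of _ "{..<m}"])
  also have "\<dots> = (\<Sum>b<k. \<Sum>b'<k. Y b b' * (if b' = b then 1 / of_nat k else 0))"
    using assms unfolding marginal_B_maxmixed_def by (simp add: sum_distrib_left[symmetric])
  also have "\<dots> = (\<Sum>b<k. Y b b / of_nat k)"
    by (simp add: if_distrib cong: if_cong)
  finally show ?thesis by (simp add: sum_divide_distrib[symmetric])
qed

lemma corr_tt:
  assumes "m > 0"
  shows "corr m k \<psi> P Y = (\<Sum>a<m. \<Sum>a'<m. cnj (P a' a) * tt m k \<psi> Y a' a) / of_nat m"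
proof -
  have "corr m k \<psi> P Y = (\<Sum>a<m. \<Sum>a'<m. \<Sum>b<k. \<Sum>b'<k. cnj (P a' a) * Y b b' * \<psi> (a', b') (a, b))"
    unfolding corr_def by (rule sum.cong[OF refl], rule sum.swap)
  also have "\<dots> = (\<Sum>a<m. \<Sum>a'<m. cnj (P a' a) * tt m k \<psi> Y a' a) / of_nat m"
    using assms unfolding tt_def by (simp add: sum_distrib_left sum_divide_distrib ac_simps)
  finally show ?thesis .
qed



lemma key:
  fixes \<rho> :: real
  assumes m: "m > 0" and k: "k > 0" and mB: "marginal_B_maxmixed m k \<psi>"
    and corrle: "\<And>P Q. str m P = 0 \<Longrightarrow> str k Q = 0 \<Longrightarrow> sinner m P P = 1 \<Longrightarrow> sinner k Q Q = 1
         \<Longrightarrow> cmod (corr m k \<psi> P Q) \<le> \<rho>"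
    and rho0: "\<rho> \<ge> 0" and tr0: "(\<Sum>b<k. Y b b) = 0"
  shows "(\<Sum>a<m. \<Sum>a'<m. (cmod (tt m k \<psi> Y a' a))\<^sup>2) * real k
     \<le> \<rho>\<^sup>2 * real m * (\<Sum>b<k. \<Sum>b'<k. (cmod (Y b' b))\<^sup>2)"
proof -
  define N2 where "N2 = (\<Sum>a<m. \<Sum>a'<m. (cmod (tt m k \<psi> Y a' a))\<^sup>2)"
  define R2 where "R2 = (\<Sum>b<k. \<Sum>b'<k. (cmod (Y b' b))\<^sup>2)"
  have N0: "N2 \<ge> 0" "R2 \<ge> 0" unfolding N2_def R2_def by (auto intro!: sum_nonneg)
  show ?thesis
  proof (cases "N2 = 0")
    case True then show ?thesis using N0 rho0 by (simp add: N2_def[symmetric] R2_def[symmetric])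
  next
    case False
    then have Npos: "N2 > 0" using N0 by simp
    have Rpos: "R2 > 0"
    proof (rule ccontr)
      assume "\<not> R2 > 0"
      then have "R2 = 0" using N0 by simp
      then have "\<forall>b\<in>{..<k}. (\<Sum>b'<k. (cmod (Y b' b))\<^sup>2) = 0"
        unfolding R2_def by (subst (asm) sum_nonneg_eq_0_iff) (auto intro!: sum_nonneg)
      then have Y0: "Y b' b = 0" if "b < k" "b' < k" for b b'
        using that by (subst (asm) sum_nonneg_eq_0_iff) auto
      have "tt m k \<psi> Y a' a = 0" for a' a
        unfolding tt_def by (simp add: Y0)
      then have "N2 = 0" unfolding N2_def by simp
      with False show False by simp
    qed
    define nP where "nP = sqrt (N2 / m)"
    define nQ where "nQ = sqrt (R2 / k)"
    have nPpos: "nP > 0" and nQpos: "nQ > 0"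
      using Npos Rpos m k by (auto simp: nP_def nQ_def)
    have nP2: "nP\<^sup>2 = N2 / m" and nQ2: "nQ\<^sup>2 = R2 / k"
      using Npos Rpos by (auto simp: nP_def nQ_def)
    define P where "P = (\<lambda>a' a. complex_of_real (1/nP) * tt m k \<psi> Y a' a)"
    define Qm where "Qm = (\<lambda>b b'. complex_of_real (1/nQ) * Y b b')"
    have "str m P = 0"
      unfolding P_def str_def by (simp add: sum_divide_distrib[symmetric] tt_trace[OF mB] tr0)
    moreover have "str k Qm = 0"
      unfolding Qm_def str_def by (simp add: sum_divide_distrib[symmetric] tr0)
    moreover have "sinner m P P = 1"
    proof -
      have "(\<Sum>i<m. \<Sum>j<m. (cmod (P j i))\<^sup>2) = (1/nP)\<^sup>2 * N2"
        unfolding P_def N2_def using nPpos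
        by (simp add: norm_divide power_divide sum_divide_distrib)
      then show ?thesis using nP2 nPpos m Npos by (simp add: sinner_self power_divide)
    qed
    moreover have "sinner k Qm Qm = 1"
    proof -
      have "(\<Sum>i<k. \<Sum>j<k. (cmod (Qm j i))\<^sup>2) = (1/nQ)\<^sup>2 * R2"
        unfolding Qm_def R2_def using nQpos
        by (simp add: norm_divide power_divide sum_divide_distrib)
      then show ?thesis using nQ2 nQpos k Rpos by (simp add: sinner_self power_divide)
    qed
    ultimately have le: "cmod (corr m k \<psi> P Qm) \<le> \<rho>" by (rule corrle)
    have "corr m k \<psi> P Qm = (\<Sum>a<m. \<Sum>a'<m. cnj (P a' a) * tt m k \<psi> Qm a' a) / of_nat m"
      by (rule corr_tt[OF m])
    also have "\<dots> = complex_of_real (1/nP * (1/nQ)) * (\<Sum>a<m. \<Sum>a'<m. cnj (tt m k \<psi> Y a' a) * tt m k \<psi> Y a' a) / of_nat m"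
      unfolding P_def Qm_def tt_scale by (simp add: sum_distrib_left ac_simps)
    also have "\<dots> = complex_of_real (1/nP * (1/nQ) * (N2 / m))"
      unfolding N2_def by (simp add: cnj_mult_self)
    also have "1/nP * (1/nQ) * (N2 / m) = nP / nQ"
      using nP2 nPpos nQpos m by (simp add: power2_eq_square field_simps)
    finally have "cmod (corr m k \<psi> P Qm) = nP / nQ" using nPpos nQpos by (simp add: norm_divide)
    with le have "nP / nQ \<le> \<rho>" by simp
    then have "nP \<le> \<rho> * nQ" using nQpos by (simp add: divide_le_eq)
    then have "nP\<^sup>2 \<le> (\<rho> * nQ)\<^sup>2" using nPpos by (intro power_mono) auto
    then have "N2 / m \<le> \<rho>\<^sup>2 * (R2 / k)" by (simp add: nP2 nQ2 power_mult_distrib)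
    then show ?thesis using m k
      by (simp add: N2_def[symmetric] R2_def[symmetric] field_simps)
  qed
qed



lemma dsum:
  assumes "finite R" "a \<in> R" "b \<in> R"
  shows "(\<Sum>z\<in>R. \<Sum>z'\<in>R. if z = a then (if z' = b then c else 0) else 0) = c"
proof -
  have "(\<Sum>z'\<in>R. if z = a then (if z' = b then c else 0) else 0) = (if z = a then c else 0)" for z
    using assms by (cases "z = a") simp_all
  then show ?thesis using assms by simp
qed

lemma psi_diag:
  assumes st: "is_state m k \<psi>" and x: "x \<in> {..<m}\<times>{..<k}"
  shows "0 \<le> Re (\<psi> x x)" "Re (\<psi> x x) \<le> 1"
proof -
  let ?R = "{..<m}\<times>{..<k}"
  have psd: "\<And>v. 0 \<le> Re (\<Sum>x\<in>?R. \<Sum>y\<in>?R. cnj (v x) * \<psi> x y * v y)"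
    using st unfolding is_state_def by blast
  have tr: "(\<Sum>x\<in>?R. \<psi> x x) = 1" using st unfolding is_state_def by blast
  have d: "0 \<le> Re (\<psi> z z)" if "z \<in> ?R" for z
  proof -
    have e: "cnj ((\<lambda>y. if y = z then 1 else 0) a) * \<psi> a b * (\<lambda>y. if y = z then 1 else 0) b
      = (if a = z then (if b = z then \<psi> z z else 0) else 0)" for a b by simp
    have "0 \<le> Re (\<Sum>a\<in>?R. \<Sum>b\<in>?R. (if a = z then (if b = z then \<psi> z z else 0) else 0))"
      using psd[of "\<lambda>y. if y = z then 1 else 0"] unfolding e .
    then show ?thesis by (simp only: dsum[OF _ that that] finite_SigmaI finite_lessThan)
  qed
  then show "0 \<le> Re (\<psi> x x)" using x .
  have "Re (\<psi> x x) \<le> (\<Sum>z\<in>?R. Re (\<psi> z z))"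
    by (rule member_le_sum) (use d x in auto)
  also have "\<dots> = 1" using tr by (metis Re_sum one_complex.sel(1))
  finally show "Re (\<psi> x x) \<le> 1" .
qed

lemma psi_bound:
  assumes st: "is_state m k \<psi>" and x: "x \<in> {..<m}\<times>{..<k}" and y: "y \<in> {..<m}\<times>{..<k}"
  shows "cmod (\<psi> x y) \<le> 1"
proof (cases "x = y")
  case True
  have h: "\<psi> x x = cnj (\<psi> x x)" using st x unfolding is_state_def by blast
  then have "Im (\<psi> x x) = 0" by (simp add: complex_eq_iff)
  then have "\<psi> x x = complex_of_real (Re (\<psi> x x))" by (simp add: complex_eq_iff)
  then have "cmod (\<psi> x x) = \<bar>Re (\<psi> x x)\<bar>" by (metis norm_of_real)
  then show ?thesis using True psi_diag[OF st x] by simp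
next
  case False
  let ?R = "{..<m}\<times>{..<k}"
  have psd: "\<And>v. 0 \<le> Re (\<Sum>x\<in>?R. \<Sum>y\<in>?R. cnj (v x) * \<psi> x y * v y)"
    using st unfolding is_state_def by blast
  have herm: "\<psi> y x = cnj (\<psi> x y)" using st x y unfolding is_state_def by blast
  show ?thesis
  proof (cases "\<psi> x y = 0")
    case True then show ?thesis by simp
  next
    case nz: False
    define w where "w = - cnj (\<psi> x y) / complex_of_real (cmod (\<psi> x y))"
    have cw: "cnj w * w = 1"
    proof -
      have "cnj w * w = complex_of_real ((cmod w)\<^sup>2)" by (rule cnj_mult_self)
      moreover have "cmod w = 1" using nz unfolding w_def by (simp add: norm_divide)
      ultimately show ?thesis by simp
    qed
    have wxy: "\<psi> x y * w = - complex_of_real (cmod (\<psi> x y))" using nz unfolding w_def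
      by (simp add: complex_norm_square[symmetric] power2_eq_square)
    define v where "v = (\<lambda>z. (if z = x then 1 else 0) + w * (if z = y then 1 else 0))"
    have "(\<Sum>z\<in>?R. \<Sum>z'\<in>?R. cnj (v z) * \<psi> z z' * v z')
        = \<psi> x x + \<psi> x y * w + cnj w * \<psi> y x + cnj w * w * \<psi> y y"
    proof -
      have e: "cnj (v a) * \<psi> a b * v b =
         (if a = x then (if b = x then \<psi> x x else 0) else 0) +
         (if a = x then (if b = y then \<psi> x y * w else 0) else 0) +
         (if a = y then (if b = x then cnj w * \<psi> y x else 0) else 0) +
         (if a = y then (if b = y then cnj w * w * \<psi> y y else 0) else 0)" for a b
        unfolding v_def using False by (auto simp: ac_simps)
      show ?thesis unfolding e using x y by (simp add: sum.distrib dsum)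
    qed
    also have "\<dots> = \<psi> x x + \<psi> y y - 2 * complex_of_real (cmod (\<psi> x y))"
    proof -
      have "cnj w * \<psi> y x = cnj (\<psi> x y * w)" using herm by (simp add: mult.commute)
      then have "cnj w * \<psi> y x = - complex_of_real (cmod (\<psi> x y))" using wxy by simp
      then show ?thesis using wxy cw by simp
    qed
    finally have "0 \<le> Re (\<psi> x x) + Re (\<psi> y y) - 2 * cmod (\<psi> x y)"
      using psd[of v] by simp
    then show ?thesis using psi_diag[OF st x] psi_diag[OF st y] by linarith
  qed
qed



lemma entry_bound:
  assumes "sinner m P P = 1" "m > 0" "a < m" "a' < m"
  shows "cmod (P a' a) \<le> real m"
proof -
  have "complex_of_real ((\<Sum>i<m. \<Sum>j<m. (cmod (P j i))\<^sup>2) / real m) = 1"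
    using assms(1) by (simp only: sinner_self)
  then have "(\<Sum>i<m. \<Sum>j<m. (cmod (P j i))\<^sup>2) / real m = 1"
    by (metis of_real_eq_1_iff)
  then have s: "(\<Sum>i<m. \<Sum>j<m. (cmod (P j i))\<^sup>2) = real m" using assms(2) by (simp add: field_simps)
  have "(cmod (P a' a))\<^sup>2 \<le> (\<Sum>j<m. (cmod (P j a))\<^sup>2)"
    by (rule member_le_sum[where f="\<lambda>j. (cmod (P j a))\<^sup>2"]) (use assms in auto)
  also have "\<dots> \<le> (\<Sum>i<m. \<Sum>j<m. (cmod (P j i))\<^sup>2)"
    by (rule member_le_sum[where f="\<lambda>i. \<Sum>j<m. (cmod (P j i))\<^sup>2"]) (use assms in \<open>auto intro: sum_nonneg\<close>)
  also have "\<dots> \<le> (real m)\<^sup>2" using s assms(2) by (simp add: power2_eq_square)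
  finally show ?thesis by (rule power2_le_imp_le) simp
qed

lemma maxcorr_props:
  assumes st: "is_state m k \<psi>" and m: "m > 0" and k: "k > 0"
  shows "0 \<le> maxcorr m k \<psi>"
    and "\<And>P Q. str m P = 0 \<Longrightarrow> str k Q = 0 \<Longrightarrow> sinner m P P = 1 \<Longrightarrow> sinner k Q Q = 1
          \<Longrightarrow> cmod (corr m k \<psi> P Q) \<le> maxcorr m k \<psi>"
proof -
  define Sset where "Sset = {cmod (corr m k \<psi> P Q) | P Q.
      str m P = 0 \<and> str k Q = 0 \<and> sinner m P P = 1 \<and> sinner k Q Q = 1}"
  have mc: "maxcorr m k \<psi> = Sup (insert 0 Sset)" unfolding maxcorr_def Sset_def by simp
  define K where "K = real m * (real k * (real m * (real k * (real m * real k))))"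
  have bnd: "cmod (corr m k \<psi> P Q) \<le> K" if "sinner m P P = 1" "sinner k Q Q = 1" for P Q
  proof -
    have t: "cmod (cnj (P a' a) * Q b b' * \<psi> (a', b') (a, b)) \<le> real m * real k"
      if "a < m" "b < k" "a' < m" "b' < k" for a b a' b'
    proof -
      have "cmod (cnj (P a' a) * Q b b' * \<psi> (a', b') (a, b))
          = cmod (P a' a) * cmod (Q b b') * cmod (\<psi> (a', b') (a, b))" by (simp add: norm_mult)
      also have "\<dots> \<le> real m * real k * 1"
        using entry_bound[OF \<open>sinner m P P = 1\<close> m \<open>a < m\<close> \<open>a' < m\<close>]
          entry_bound[OF \<open>sinner k Q Q = 1\<close> k \<open>b' < k\<close> \<open>b < k\<close>]
          psi_bound[OF st, of "(a',b')" "(a,b)"] that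
        by (intro mult_mono) auto
      finally show ?thesis by simp
    qed
    define F where "F a b a' b' = cnj (P a' a) * Q b b' * \<psi> (a', b') (a, b)" for a b a' b'
    have h1: "cmod (\<Sum>b'<k. F a b a' b') \<le> real k * (real m * real k)" if "a < m" "b < k" "a' < m" for a b a'
      using sum_norm_bound[of "{..<k}" "F a b a'" "real m * real k"] t that unfolding F_def by simp
    have h2: "cmod (\<Sum>a'<m. \<Sum>b'<k. F a b a' b') \<le> real m * (real k * (real m * real k))" if "a < m" "b < k" for a b
      using sum_norm_bound[of "{..<m}" "\<lambda>a'. \<Sum>b'<k. F a b a' b'" "real k * (real m * real k)"] h1 that by simp
    have h3: "cmod (\<Sum>b<k. \<Sum>a'<m. \<Sum>b'<k. F a b a' b') \<le> real k * (real m * (real k * (real m * real k)))" if "a < m" for a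
      using sum_norm_bound[of "{..<k}" "\<lambda>b. \<Sum>a'<m. \<Sum>b'<k. F a b a' b'" "real m * (real k * (real m * real k))"] h2 that by simp
    have h4: "cmod (\<Sum>a<m. \<Sum>b<k. \<Sum>a'<m. \<Sum>b'<k. F a b a' b') \<le> K"
      using sum_norm_bound[of "{..<m}" "\<lambda>a. \<Sum>b<k. \<Sum>a'<m. \<Sum>b'<k. F a b a' b'" "real k * (real m * (real k * (real m * real k)))"] h3
      unfolding K_def by simp
    then show ?thesis unfolding corr_def F_def .
  qed
  have bdd: "bdd_above (insert 0 Sset)"
    unfolding bdd_above_def Sset_def using bnd K_def
    by (intro exI[of _ K]) (auto intro!: mult_nonneg_nonneg)
  show "0 \<le> maxcorr m k \<psi>" unfolding mc by (rule cSup_upper[OF _ bdd]) simp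
  show "cmod (corr m k \<psi> P Q) \<le> maxcorr m k \<psi>"
    if "str m P = 0" "str k Q = 0" "sinner m P P = 1" "sinner k Q Q = 1" for P Q
    unfolding mc by (rule cSup_upper[OF _ bdd]) (use that in \<open>auto simp: Sset_def\<close>)
qed



lemma collapse:
  assumes "finite A" "a \<in> A" "a' \<in> A"
  shows "(\<Sum>x\<in>A. \<Sum>y\<in>B. \<Sum>x'\<in>A. \<Sum>y'\<in>B. cnj (if x' = a' \<and> x = a then 1 else 0) * R x y x' y')
     = (\<Sum>y\<in>B. \<Sum>y'\<in>B. (R a y a' y' :: complex))"
proof -
  have "(\<Sum>y\<in>B. \<Sum>x'\<in>A. \<Sum>y'\<in>B. cnj (if x' = a' \<and> x = a then 1 else 0) * R x y x' y')
      = (if x = a then (\<Sum>y\<in>B. \<Sum>y'\<in>B. R a y a' y') else 0)" for x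
  proof (cases "x = a")
    case True
    have "(\<Sum>x'\<in>A. \<Sum>y'\<in>B. cnj (if x' = a' \<and> x = a then 1 else 0) * R x y x' y')
       = (\<Sum>x'\<in>A. if x' = a' then (\<Sum>y'\<in>B. R a y a' y') else 0)" for y
      by (rule sum.cong) (auto simp: True)
    then show ?thesis using assms True by simp
  qed simp
  then show ?thesis using assms by simp
qed

lemma T_formula:
  assumes mk: "is_markov_op m k n \<psi> T" and m: "m > 0"
    and as: "as \<in> idx m n" "as' \<in> idx m n"
  shows "T X as' as = of_nat (m ^ n) *
     (\<Sum>bs\<in>idx k n. \<Sum>bs'\<in>idx k n. X bs bs' * psi_tensor n \<psi> (as', bs') (as, bs))"
proof -
  define M :: nmat where "M = (\<lambda>j i. if j = as' \<and> i = as then 1 else 0)"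
  have "pair_trace m k n \<psi> M X = ninner m n M (T X)" using mk unfolding is_markov_op_def by blast
  moreover have "pair_trace m k n \<psi> M X = (\<Sum>bs\<in>idx k n. \<Sum>bs'\<in>idx k n. X bs bs' * psi_tensor n \<psi> (as', bs') (as, bs))"
    unfolding pair_trace_def M_def using collapse[OF finite_idx as,
        where B="idx k n" and R="\<lambda>x y x' y'. X y y' * psi_tensor n \<psi> (x', y') (x, y)"]
    by (simp add: mult.assoc)
  moreover have "ninner m n M (T X) = T X as' as / of_nat (m ^ n)"
  proof -
    have "(\<Sum>i\<in>idx m n. \<Sum>j\<in>idx m n. cnj (M j i) * T X j i)
        = (\<Sum>i\<in>idx m n. if i = as then T X as' as else 0)"
    proof -
      have e: "cnj (M j i) * T X j i = (if i = as then (if j = as' then T X as' as else 0) else 0)" for i j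
        by (simp add: M_def)
      show ?thesis unfolding e using as by (intro sum.cong refl) (simp)
    qed
    also have "\<dots> = T X as' as" using as by simp
    finally show ?thesis unfolding ninner_def by simp
  qed
  ultimately show ?thesis using m by (simp add: field_simps)
qed



lemma sum_prod2:
  "(\<Sum>bs\<in>idx k n. \<Sum>bs'\<in>idx k n. \<Prod>i<n. f i (bs!i) (bs'!i))
    = (\<Prod>i<n. \<Sum>b<k. \<Sum>b'<k. (f i b b' :: complex))"
proof -
  have "(\<Sum>bs'\<in>idx k n. \<Prod>i<n. f i (bs!i) (bs'!i)) = (\<Prod>i<n. \<Sum>b'<k. f i (bs!i) b')" for bs
    unfolding idx_lset by (rule sum_prod_lset[where g="\<lambda>i x. f i (bs!i) x"])
  then show ?thesis
    unfolding idx_lset by (simp add: sum_prod_lset[where g="\<lambda>i b. \<Sum>b'<k. f i b b'"])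
qed

lemma TX_formula:
  assumes mk: "is_markov_op m k n \<psi> T" and m: "m > 0"
    and as: "as \<in> idx m n" "as' \<in> idx m n"
  shows "T (\<lambda>bs bs'. \<Sum>\<sigma>\<in>L. c \<sigma> * (\<Prod>i<n. Bs (\<sigma>!i) (bs!i) (bs'!i))) as' as
     = (\<Sum>\<sigma>\<in>L. c \<sigma> * (\<Prod>i<n. tt m k \<psi> (Bs (\<sigma>!i)) (as'!i) (as!i)))"
proof -
  have "T (\<lambda>bs bs'. \<Sum>\<sigma>\<in>L. c \<sigma> * (\<Prod>i<n. Bs (\<sigma>!i) (bs!i) (bs'!i))) as' as
     = of_nat (m ^ n) * (\<Sum>bs\<in>idx k n. \<Sum>bs'\<in>idx k n.
        (\<Sum>\<sigma>\<in>L. c \<sigma> * (\<Prod>i<n. Bs (\<sigma>!i) (bs!i) (bs'!i))) * psi_tensor n \<psi> (as', bs') (as, bs))"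
    by (rule T_formula[OF mk m as])
  also have "\<dots> = (\<Sum>\<sigma>\<in>L. c \<sigma> * (of_nat (m ^ n) * (\<Sum>bs\<in>idx k n. \<Sum>bs'\<in>idx k n.
        (\<Prod>i<n. Bs (\<sigma>!i) (bs!i) (bs'!i) * \<psi> (as'!i, bs'!i) (as!i, bs!i)))))"
    unfolding psi_tensor_def
    by (simp add: sum_distrib_left sum_distrib_right prod.distrib sum.swap[of _ L] ac_simps)
  also have "\<dots> = (\<Sum>\<sigma>\<in>L. c \<sigma> * (\<Prod>i<n. tt m k \<psi> (Bs (\<sigma>!i)) (as'!i) (as!i)))"
  proof (rule sum.cong[OF refl])
    fix \<sigma>
    have "(\<Sum>bs\<in>idx k n. \<Sum>bs'\<in>idx k n. (\<Prod>i<n. Bs (\<sigma>!i) (bs!i) (bs'!i) * \<psi> (as'!i, bs'!i) (as!i, bs!i)))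
      = (\<Prod>i<n. \<Sum>b<k. \<Sum>b'<k. Bs (\<sigma>!i) b b' * \<psi> (as'!i, b') (as!i, b))"
      by (rule sum_prod2[where f="\<lambda>i b b'. Bs (\<sigma>!i) b b' * \<psi> (as'!i, b') (as!i, b)"])
    then show "c \<sigma> * (of_nat (m ^ n) * (\<Sum>bs\<in>idx k n. \<Sum>bs'\<in>idx k n.
        (\<Prod>i<n. Bs (\<sigma>!i) (bs!i) (bs'!i) * \<psi> (as'!i, bs'!i) (as!i, bs!i))))
      = c \<sigma> * (\<Prod>i<n. tt m k \<psi> (Bs (\<sigma>!i)) (as'!i) (as!i))"
      unfolding tt_def by (simp add: prod.distrib)
  qed
  finally show ?thesis .
qed

lemma Re_ninner: "Re (ninner m n Z Z) = (\<Sum>i\<in>idx m n. \<Sum>j\<in>idx m n. (cmod (Z j i))\<^sup>2) / real m ^ n"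
proof -
  have "(\<Sum>i\<in>idx m n. \<Sum>j\<in>idx m n. cnj (Z j i) * Z j i) = complex_of_real (\<Sum>i\<in>idx m n. \<Sum>j\<in>idx m n. (cmod (Z j i))\<^sup>2)"
    by (simp only: cnj_mult_self of_real_sum)
  then show ?thesis unfolding ninner_def by simp
qed



lemma onb_id: "std_onb k Bs \<Longrightarrow> i < k \<Longrightarrow> j < k \<Longrightarrow> Bs 0 i j = (if i = j then 1 else 0)"
  unfolding std_onb_def by blast

lemma onb_orth: "std_onb k Bs \<Longrightarrow> s < k^2 \<Longrightarrow> t < k^2 \<Longrightarrow> sinner k (Bs s) (Bs t) = (if s = t then 1 else 0)"
  unfolding std_onb_def by blast

lemma tr_Bs:
  assumes onb: "std_onb k Bs" and k: "k > 0" and s: "s \<in> {1..<k^2}"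
  shows "(\<Sum>b<k. Bs s b b) = 0"
proof -
  have "sinner k (Bs 0) (Bs s) = 0" using onb_orth[OF onb, of 0 s] s k by simp
  moreover have "sinner k (Bs 0) (Bs s) = (\<Sum>b<k. Bs s b b) / of_nat k"
  proof -
    have e: "cnj (Bs 0 j i) * Bs s j i = (if j = i then Bs s i i else 0)" if "i < k" "j < k" for i j
      using onb_id[OF onb that(2,1)] by simp
    have "(\<Sum>i<k. \<Sum>j<k. cnj (Bs 0 j i) * Bs s j i) = (\<Sum>i<k. Bs s i i)"
      by (rule sum.cong[OF refl]) (simp add: e)
    then show ?thesis unfolding sinner_def by simp
  qed
  ultimately show ?thesis using k by simp
qed

lemma tt_id:
  assumes mA: "marginal_A_maxmixed m k \<psi>" and m: "m > 0" and onb: "std_onb k Bs"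
    and a: "a < m" "a' < m"
  shows "tt m k \<psi> (Bs 0) a' a = (if a' = a then 1 else 0)"
proof -
  have e: "(\<Sum>b'<k. Bs 0 b b' * \<psi> (a', b') (a, b)) = \<psi> (a', b) (a, b)" if "b < k" for b
  proof -
    have "(\<Sum>b'<k. Bs 0 b b' * \<psi> (a', b') (a, b)) = (\<Sum>b'<k. if b = b' then \<psi> (a', b) (a, b) else 0)"
      by (rule sum.cong[OF refl]) (use onb_id[OF onb] that in simp)
    then show ?thesis using that by simp
  qed
  have "tt m k \<psi> (Bs 0) a' a = of_nat m * (\<Sum>b<k. \<psi> (a', b) (a, b))"
    unfolding tt_def by (simp add: e)
  also have "\<dots> = (if a' = a then 1 else 0)"
  proof -
    have "(\<Sum>b<k. \<psi> (a', b) (a, b)) = (if a' = a then 1 / of_nat m else 0)"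
      using mA a unfolding marginal_A_maxmixed_def by blast
    then show ?thesis using m by simp
  qed
  finally show ?thesis .
qed

lemma tt_lin: "(\<Sum>s\<in>D. d s * tt m k \<psi> (Bs s) a' a) = tt m k \<psi> (\<lambda>b b'. \<Sum>s\<in>D. d s * Bs s b b') a' a"
proof -
  have "(\<Sum>s\<in>D. d s * tt m k \<psi> (Bs s) a' a) = of_nat m * (\<Sum>s\<in>D. \<Sum>b<k. \<Sum>b'<k. d s * (Bs s b b' * \<psi> (a',b') (a,b)))"
    unfolding tt_def by (simp add: sum_distrib_left mult.left_commute)
  also have "\<dots> = of_nat m * (\<Sum>b<k. \<Sum>s\<in>D. \<Sum>b'<k. d s * (Bs s b b' * \<psi> (a',b') (a,b)))"
    by (subst sum.swap) (rule refl)
  also have "\<dots> = of_nat m * (\<Sum>b<k. \<Sum>b'<k. \<Sum>s\<in>D. d s * (Bs s b b' * \<psi> (a',b') (a,b)))"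
    by (subst (2) sum.swap) (rule refl)
  also have "\<dots> = tt m k \<psi> (\<lambda>b b'. \<Sum>s\<in>D. d s * Bs s b b') a' a"
    unfolding tt_def by (simp add: sum_distrib_right mult.assoc)
  finally show ?thesis .
qed

lemma single_S:
  fixes \<rho> :: real
  assumes m: "m > 0" and k: "k > 0" and mB: "marginal_B_maxmixed m k \<psi>" and onb: "std_onb k Bs"
    and corrle: "\<And>P Q. str m P = 0 \<Longrightarrow> str k Q = 0 \<Longrightarrow> sinner m P P = 1 \<Longrightarrow> sinner k Q Q = 1
         \<Longrightarrow> cmod (corr m k \<psi> P Q) \<le> \<rho>"
    and rho0: "\<rho> \<ge> 0"
  shows "(\<Sum>a<m. \<Sum>a'<m. (cmod (\<Sum>s\<in>{1..<k^2}. d s * tt m k \<psi> (Bs s) a' a))\<^sup>2)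
     \<le> real m * \<rho>\<^sup>2 * (\<Sum>s\<in>{1..<k^2}. (cmod (d s))\<^sup>2)"
proof -
  define Y where "Y = (\<lambda>b b'. \<Sum>s\<in>{1..<k^2}. d s * Bs s b b')"
  have tr: "(\<Sum>b<k. Y b b) = 0"
  proof -
    have "(\<Sum>b<k. Y b b) = (\<Sum>s\<in>{1..<k^2}. \<Sum>b<k. d s * Bs s b b)"
      unfolding Y_def by (rule sum.swap)
    also have "\<dots> = (\<Sum>s\<in>{1..<k^2}. d s * (\<Sum>b<k. Bs s b b))"
      by (simp only: sum_distrib_left)
    also have "\<dots> = 0" using tr_Bs[OF onb k] by simp
    finally show ?thesis .
  qed
  have R: "(\<Sum>b<k. \<Sum>b'<k. (cmod (Y b' b))\<^sup>2) = real k * (\<Sum>s\<in>{1..<k^2}. (cmod (d s))\<^sup>2)"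
    unfolding Y_def by (rule onb_sum[OF onb]) auto
  have "(\<Sum>a<m. \<Sum>a'<m. (cmod (tt m k \<psi> Y a' a))\<^sup>2) * real k
     \<le> \<rho>\<^sup>2 * real m * (\<Sum>b<k. \<Sum>b'<k. (cmod (Y b' b))\<^sup>2)"
    by (rule key[where Y=Y and \<rho>=\<rho>, OF m k mB corrle rho0 tr])
  then have "(\<Sum>a<m. \<Sum>a'<m. (cmod (tt m k \<psi> Y a' a))\<^sup>2) * real k
     \<le> (real m * \<rho>\<^sup>2 * (\<Sum>s\<in>{1..<k^2}. (cmod (d s))\<^sup>2)) * real k"
    unfolding R by (simp add: ac_simps)
  then have "(\<Sum>a<m. \<Sum>a'<m. (cmod (tt m k \<psi> Y a' a))\<^sup>2)
     \<le> real m * \<rho>\<^sup>2 * (\<Sum>s\<in>{1..<k^2}. (cmod (d s))\<^sup>2)"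
    using k by simp
  then show ?thesis unfolding tt_lin Y_def .
qed

lemma single_notS:
  assumes mA: "marginal_A_maxmixed m k \<psi>" and m: "m > 0" and onb: "std_onb k Bs"
  shows "(\<Sum>a<m. \<Sum>a'<m. (cmod (\<Sum>s\<in>{0}. d s * tt m k \<psi> (Bs s) a' a))\<^sup>2)
     \<le> real m * 1 * (\<Sum>s\<in>{0}. (cmod (d s))\<^sup>2)"
proof -
  have "(\<Sum>a<m. \<Sum>a'<m. (cmod (\<Sum>s\<in>{0}. d s * tt m k \<psi> (Bs s) a' a))\<^sup>2)
      = (\<Sum>a<m. \<Sum>a'<m. if a' = a then (cmod (d 0))\<^sup>2 else 0)"
    by (intro sum.cong refl) (simp add: tt_id[OF mA m onb])
  also have "\<dots> = real m * (cmod (d 0))\<^sup>2" by simp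
  finally show ?thesis by simp
qed



theorem proposition3p13:
  fixes n mA mB :: nat and \<psi> :: bmat and T :: "nmat \<Rightarrow> nmat"
    and Bs :: "nat \<Rightarrow> smat" and Q :: nmat and S :: "nat set"
  assumes "n > 0" and "mA > 0" and "mB > 0"
    and "is_state mA mB \<psi>"
    and "marginal_A_maxmixed mA mB \<psi>" and "marginal_B_maxmixed mA mB \<psi>"
    and "is_markov_op mA mB n \<psi> T"
    and "std_onb mB Bs"
    and "S \<subseteq> {..<n}"
  shows "nnorm2 mA n (T (es_comp mB n Bs Q S))
           \<le> maxcorr mA mB \<psi> ^ card S * nnorm2 mB n (es_comp mB n Bs Q S)"
proof -
  note m = assms(2) and k = assms(3) and st = assms(4) and mA = assms(5) and mB = assms(6)
    and mk = assms(7) and onb = assms(8) and Ssub = assms(9)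
  define \<rho> where "\<rho> = maxcorr mA mB \<psi>"
  have rho0: "0 \<le> \<rho>" unfolding \<rho>_def by (rule maxcorr_props(1)[OF st m k])
  have corrle: "\<And>P Q. str mA P = 0 \<Longrightarrow> str mB Q = 0 \<Longrightarrow> sinner mA P P = 1 \<Longrightarrow> sinner mB Q Q = 1
          \<Longrightarrow> cmod (corr mA mB \<psi> P Q) \<le> \<rho>"
    unfolding \<rho>_def by (rule maxcorr_props(2)[OF st m k])
  define D where "D i = (if i \<in> S then {1..<mB^2} else {0})" for i
  have finD: "finite (D i)" for i unfolding D_def by simp
  have k2: "mB^2 > 0" using k by simp
  have Dsub: "D i \<subseteq> {..<mB^2}" for i unfolding D_def using k2 by auto
  define c where "c = fourier_coeff mB n Bs Q"
  define L where "L = lset D n"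
  have Leq: "{\<sigma>\<in>idx (mB^2) n. {i. i < n \<and> \<sigma> ! i \<noteq> 0} = S} = L"
  proof (rule set_eqI, rule iffI)
    fix \<sigma> assume "\<sigma> \<in> {\<sigma>\<in>idx (mB^2) n. {i. i < n \<and> \<sigma> ! i \<noteq> 0} = S}"
    then have len: "length \<sigma> = n" and lt: "\<And>i. i < n \<Longrightarrow> \<sigma> ! i < mB^2"
      and sup: "{i. i < n \<and> \<sigma> ! i \<noteq> 0} = S"
      by (simp_all add: idx_def all_set_conv_all_nth)
    have "\<sigma> ! i \<in> D i" if "i < n" for i
    proof (cases "i \<in> S")
      case True
      then have "\<sigma> ! i \<noteq> 0" using sup by blast
      then show ?thesis using True lt[OF that] by (simp add: D_def)
    next
      case False
      then have "\<sigma> ! i = 0" using sup that by blast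
      then show ?thesis using False by (simp add: D_def)
    qed
    then show "\<sigma> \<in> L" using len by (simp add: L_def lset_def)
  next
    fix \<sigma> assume "\<sigma> \<in> L"
    then have len: "length \<sigma> = n" and inD: "\<And>i. i < n \<Longrightarrow> \<sigma> ! i \<in> D i"
      by (auto simp: L_def lset_def)
    have lt: "\<sigma> ! i < mB^2" if "i < n" for i using inD[OF that] Dsub[of i] by blast
    have "\<sigma> \<in> idx (mB^2) n"
      unfolding idx_def using len lt by (simp add: all_set_conv_all_nth)
    moreover have "{i. i < n \<and> \<sigma> ! i \<noteq> 0} = S"
    proof (rule set_eqI)
      fix i
      show "i \<in> {i. i < n \<and> \<sigma> ! i \<noteq> 0} \<longleftrightarrow> i \<in> S"
      proof (cases "i < n")
        case iN: True
        have d: "\<sigma> ! i \<in> D i" by (rule inD[OF iN])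
        show ?thesis
        proof (cases "i \<in> S")
          case iS: True
          then have "\<sigma> ! i \<noteq> 0" using d unfolding D_def by simp
          then show ?thesis using iS iN by simp
        next
          case iS: False
          then have "\<sigma> ! i = 0" using d unfolding D_def by simp
          then show ?thesis using iS iN by simp
        qed
      next
        case iN: False
        then show ?thesis using Ssub by auto
      qed
    qed
    ultimately show "\<sigma> \<in> {\<sigma>\<in>idx (mB^2) n. {i. i < n \<and> \<sigma> ! i \<noteq> 0} = S}" by simp
  qed
  define X where "X = (\<lambda>bs bs'. \<Sum>\<sigma>\<in>L. c \<sigma> * (\<Prod>i<n. Bs (\<sigma>!i) (bs!i) (bs'!i)))"
  have Xeq: "es_comp mB n Bs Q S = X"
    unfolding es_comp_def X_def Leq c_def[symmetric]
    by (intro ext sum.cong refl) (simp add: basis_prod_def L_def lset_def)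
  have TX: "T X as' as = (\<Sum>\<sigma>\<in>L. c \<sigma> * (\<Prod>i<n. tt mA mB \<psi> (Bs (\<sigma>!i)) (as'!i) (as!i)))"
    if "as \<in> idx mA n" "as' \<in> idx mA n" for as as'
    unfolding X_def by (rule TX_formula[OF mk m that])
  define lam where "lam i = (if i \<in> S then \<rho>\<^sup>2 else 1)" for i
  define SC where "SC = (\<Sum>\<sigma>\<in>L. (cmod (c \<sigma>))\<^sup>2)"
  define SA where "SA = (\<Sum>as\<in>idx mA n. \<Sum>as'\<in>idx mA n. (cmod (T X as' as))\<^sup>2)"
  define SB where "SB = (\<Sum>as\<in>idx mB n. \<Sum>as'\<in>idx mB n. (cmod (X as' as))\<^sup>2)"
  have A: "SA \<le> real mA ^ n * (\<Prod>i<n. lam i) * SC"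
  proof -
    have "SA = (\<Sum>as\<in>idx mA n. \<Sum>as'\<in>idx mA n.
       (cmod (\<Sum>\<sigma>\<in>lset D n. c \<sigma> * (\<Prod>i<n. (\<lambda>i s. tt mA mB \<psi> (Bs s)) i (\<sigma>!i) (as'!i) (as!i))))\<^sup>2)"
      unfolding SA_def L_def[symmetric] by (intro sum.cong refl) (simp add: TX)
    also have "\<dots> \<le> real mA ^ n * (\<Prod>i<n. lam i) * (\<Sum>\<sigma>\<in>lset D n. (cmod (c \<sigma>))\<^sup>2)"
    proof (rule tensor_le[where G="\<lambda>i s. tt mA mB \<psi> (Bs s)" and D=D and lam=lam and c=c and m=mA and n=n, OF finD])
      show "0 \<le> lam i" for i unfolding lam_def by simp
      show "(\<Sum>a<mA. \<Sum>a'<mA. (cmod (\<Sum>s\<in>D i. d s * tt mA mB \<psi> (Bs s) a' a))\<^sup>2)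
          \<le> real mA * lam i * (\<Sum>s\<in>D i. (cmod (d s))\<^sup>2)" for i d
      proof (cases "i \<in> S")
        case True
        have e: "D i = {1..<mB^2}" "lam i = \<rho>\<^sup>2" using True by (simp_all add: D_def lam_def)
        have "(\<Sum>a<mA. \<Sum>a'<mA. (cmod (\<Sum>s\<in>{1..<mB^2}. d s * tt mA mB \<psi> (Bs s) a' a))\<^sup>2)
          \<le> real mA * \<rho>\<^sup>2 * (\<Sum>s\<in>{1..<mB^2}. (cmod (d s))\<^sup>2)"
          by (rule single_S[where \<rho>=\<rho> and d=d and m=mA and k=mB and \<psi>=\<psi> and Bs=Bs, OF m k mB onb corrle rho0])
        then show ?thesis unfolding e .
      next
        case False
        have e: "D i = {0}" "lam i = 1" using False by (simp_all add: D_def lam_def)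
        show ?thesis unfolding e
          by (rule single_notS[where d=d and m=mA and k=mB and \<psi>=\<psi> and Bs=Bs, OF mA m onb])
      qed
    qed
    finally show ?thesis unfolding SC_def L_def .
  qed
  have B: "SB \<ge> real mB ^ n * (\<Prod>i<n. (1::real)) * SC"
  proof -
    have "SB = (\<Sum>as\<in>idx mB n. \<Sum>as'\<in>idx mB n.
       (cmod (\<Sum>\<sigma>\<in>lset D n. c \<sigma> * (\<Prod>i<n. (\<lambda>i s. Bs s) i (\<sigma>!i) (as'!i) (as!i))))\<^sup>2)"
      unfolding SB_def X_def L_def by simp
    also have "\<dots> \<ge> real mB ^ n * (\<Prod>i<n. (1::real)) * (\<Sum>\<sigma>\<in>lset D n. (cmod (c \<sigma>))\<^sup>2)"
    proof (rule tensor_ge[where G="\<lambda>i s. Bs s" and D=D and lam="\<lambda>_. 1" and c=c and m=mB and n=n, OF finD])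
      show "0 \<le> (1::real)" by simp
      show "(\<Sum>a<mB. \<Sum>a'<mB. (cmod (\<Sum>s\<in>D i. d s * Bs s a' a))\<^sup>2)
          \<ge> real mB * 1 * (\<Sum>s\<in>D i. (cmod (d s))\<^sup>2)" for i d
        using onb_sum[OF onb Dsub[of i], of d] by simp
    qed
    finally show ?thesis unfolding SC_def L_def .
  qed
  have plam: "(\<Prod>i<n. lam i) = (\<rho> ^ card S)\<^sup>2"
  proof -
    have "(\<Prod>i<n. lam i) = (\<Prod>i\<in>{..<n} \<inter> {x. x \<in> S}. \<rho>\<^sup>2) * (\<Prod>i\<in>{..<n} \<inter> - {x. x \<in> S}. 1)"
      unfolding lam_def by (rule prod.If_cases) simp
    also have "{..<n} \<inter> {x. x \<in> S} = S" using Ssub by auto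
    finally show ?thesis by (simp add: power_mult[symmetric] power_mult_distrib mult.commute)
  qed
  have SC0: "SC \<ge> 0" unfolding SC_def by (auto intro!: sum_nonneg)
  have nA: "nnorm2 mA n (T X) = sqrt (SA / real mA ^ n)"
    unfolding nnorm2_def Re_ninner SA_def ..
  have nB: "nnorm2 mB n X = sqrt (SB / real mB ^ n)"
    unfolding nnorm2_def Re_ninner SB_def ..
  have "SA / real mA ^ n \<le> (\<rho> ^ card S)\<^sup>2 * SC"
    using A m unfolding plam by (simp add: divide_le_eq ac_simps)
  then have "sqrt (SA / real mA ^ n) \<le> sqrt ((\<rho> ^ card S)\<^sup>2 * SC)" by (rule real_sqrt_le_mono)
  also have "\<dots> = \<rho> ^ card S * sqrt SC" using rho0 by (simp add: real_sqrt_mult)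
  also have "\<dots> \<le> \<rho> ^ card S * sqrt (SB / real mB ^ n)"
  proof (rule mult_left_mono)
    have "SC \<le> SB / real mB ^ n" using B k by (simp add: le_divide_eq ac_simps)
    then show "sqrt SC \<le> sqrt (SB / real mB ^ n)" by (rule real_sqrt_le_mono)
    show "0 \<le> \<rho> ^ card S" using rho0 by simp
  qed
  finally show ?thesis unfolding Xeq \<rho>_def[symmetric] nA nB .
qed

end
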